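(* Let $(\mathfrak g,D)$ be a difference Lie algebra. Set $C^1(\mathfrak g,D)=\mathrm{Hom}(\mathfrak g,\mathfrak g)$ and $C^n(\mathfrak g,D)=\mathrm{Hom}(\wedge^n\mathfrak g,\mathfrak g)\oplus\mathrm{Hom}(\wedge^{n-1}\mathfrak g,\mathfrak g)$ for $n\ge2$, and define $\bar\delta:C^n(\mathfrak g,D)\to C^{n+1}(\mathfrak g,D)$ by $\bar\delta(f,\theta)=(d^{CE}_{\mathrm{ad}}f,\ d^{CE}_{\mathrm{ad}_D}\theta+T(f))$ (for $n=1$, $\bar\delta(f)=(d^{CE}_{\mathrm{ad}}f,T(f))$). Then $\bar\delta\circ\bar\delta=0$.
   Context: A difference Lie algebra $(\mathfrak g,D)$ is a Lie algebra $\mathfrak g$ with a linear map $D:\mathfrak g\to\mathfrak g$ such that $D[x,y]=[x,D(y)]-[y,D(x)]+[D(x),D(y)]$ for all $x,y$. $d^{CE}_{\mathrm{ad}}$ is the Chevalley–Eilenberg differential of $\mathfrak g$ with coefficients in the adjoint representation, and $d^{CE}_{\mathrm{ad}_D}$ the one with coefficients in the representation $\mathrm{ad}_D(x)u=[x,u]+[D(x),u]$. For $f\in\mathrm{Hom}(\wedge^n\mathfrak g,\mathfrak g)$, $T(f)\in\mathrm{Hom}(\wedge^n\mathfrak g,\mathfrak g)$ is $T(f)(x_1,\dots,x_n)=(-1)^n\big(\sum_{k=1}^n\sum_{1\le i_1<\cdots<i_k\le n}f(y_1,\dots,y_n)-D(f(x_1,\dots,x_n))\big)$, where $y_j=D(x_j)$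 if $j\in\{i_1,\dots,i_k\}$ and $y_j=x_j$ otherwise. *)

theory Defs
  imports Main "HOL.Vector_Spaces"
begin

definition lie_algebra :: "('k::field \<Rightarrow> 'g::ab_group_add \<Rightarrow> 'g) \<Rightarrow> ('g \<Rightarrow> 'g \<Rightarrow> 'g) \<Rightarrow> bool" where
  "lie_algebra scale br \<longleftrightarrow>
     vector_space scale \<and>
     (\<forall>x. Vector_Spaces.linear scale scale (br x)) \<and>
     (\<forall>y. Vector_Spaces.linear scale scale (\<lambda>x. br x y)) \<and>
     (\<forall>x. br x x = 0) \<and>
     (\<forall>x y z. br x (br y z) + br y (br z x) + br z (br x y) = 0)"

definition difference_lie_algebra ::
  "('k::field \<Rightarrow> 'g::ab_group_add \<Rightarrow> 'g) \<Rightarrow> ('g \<Rightarrow> 'g \<Rightarrow> 'g) \<Rightarrow> ('g \<Rightarrow> 'g) \<Rightarrow> bool" where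
  "difference_lie_algebra scale br D \<longleftrightarrow>
     lie_algebra scale br \<and> Vector_Spaces.linear scale scale D \<and>
     (\<forall>x y. D (br x y) = br x (D y) - br y (D x) + br (D x) (D y))"

text \<open>n-cochains: elements of Hom(wedge^n g, g), represented as functions on lists,
 only their values on lists of length n being relevant: alternating n-linear maps.\<close>

definition alt_multilinear :: "('k::field \<Rightarrow> 'g::ab_group_add \<Rightarrow> 'g) \<Rightarrow> nat \<Rightarrow> ('g list \<Rightarrow> 'g) \<Rightarrow> bool" where
  "alt_multilinear scale n f \<longleftrightarrow>
     (\<forall>xs i. length xs = n \<and> i < n \<longrightarrow> Vector_Spaces.linear scale scale (\<lambda>a. f (xs[i := a]))) \<and>
     (\<forall>xs i j. length xs = n \<and> i < j \<and> j < n \<and> xs ! i = xs ! j \<longrightarrow> f xs = 0)"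

definition del_nth :: "nat \<Rightarrow> 'a list \<Rightarrow> 'a list" where
  "del_nth i xs = take i xs @ drop (Suc i) xs"

text \<open>Chevalley--Eilenberg differential with coefficients in a representation rho
 (indices 0-based, so the usual signs (-1)^(i+1), (-1)^(i+j) become (-1)^i, (-1)^(i+j)).\<close>

definition ce_diff :: "('k::field \<Rightarrow> 'g::ab_group_add \<Rightarrow> 'g) \<Rightarrow> ('g \<Rightarrow> 'g \<Rightarrow> 'g) \<Rightarrow> ('g \<Rightarrow> 'g \<Rightarrow> 'g)
    \<Rightarrow> ('g list \<Rightarrow> 'g) \<Rightarrow> 'g list \<Rightarrow> 'g" where
  "ce_diff scale br rho f xs =
     (\<Sum>i<length xs. scale ((-1) ^ i) (rho (xs ! i) (f (del_nth i xs))))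
   + (\<Sum>i<length xs. \<Sum>j\<in>{Suc i..<length xs}.
        scale ((-1) ^ (i + j)) (f (br (xs ! i) (xs ! j) # del_nth i (del_nth j xs))))"

definition ad :: "('g \<Rightarrow> 'g \<Rightarrow> 'g) \<Rightarrow> 'g \<Rightarrow> 'g \<Rightarrow> 'g" where
  "ad br x u = br x u"

definition ad_D :: "('g \<Rightarrow> 'g \<Rightarrow> 'g) \<Rightarrow> ('g \<Rightarrow> 'g) \<Rightarrow> 'g \<Rightarrow> 'g \<Rightarrow> 'g::ab_group_add" where
  "ad_D br D x u = br x u + br (D x) u"

definition apply_D_at :: "('g \<Rightarrow> 'g) \<Rightarrow> nat set \<Rightarrow> 'g list \<Rightarrow> 'g list" where
  "apply_D_at D S xs = map (\<lambda>i. if i \<in> S then D (xs ! i) else xs ! i) [0..<length xs]"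

definition T_op :: "('k::field \<Rightarrow> 'g::ab_group_add \<Rightarrow> 'g) \<Rightarrow> ('g \<Rightarrow> 'g) \<Rightarrow> ('g list \<Rightarrow> 'g) \<Rightarrow> 'g list \<Rightarrow> 'g" where
  "T_op scale D f xs = scale ((-1) ^ length xs)
      ((\<Sum>S\<in>{S. S \<subseteq> {..<length xs} \<and> S \<noteq> {}}. f (apply_D_at D S xs)) - D (f xs))"

definition delta_bar :: "('k::field \<Rightarrow> 'g::ab_group_add \<Rightarrow> 'g) \<Rightarrow> ('g \<Rightarrow> 'g \<Rightarrow> 'g) \<Rightarrow> ('g \<Rightarrow> 'g)
    \<Rightarrow> ('g list \<Rightarrow> 'g) \<times> ('g list \<Rightarrow> 'g) \<Rightarrow> ('g list \<Rightarrow> 'g) \<times> ('g list \<Rightarrow> 'g)" where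
  "delta_bar scale br D c =
     (ce_diff scale br (ad br) (fst c),
      \<lambda>xs. ce_diff scale br (ad_D br D) (snd c) xs + T_op scale D (fst c) xs)"

definition delta_bar1 :: "('k::field \<Rightarrow> 'g::ab_group_add \<Rightarrow> 'g) \<Rightarrow> ('g \<Rightarrow> 'g \<Rightarrow> 'g) \<Rightarrow> ('g \<Rightarrow> 'g)
    \<Rightarrow> ('g list \<Rightarrow> 'g) \<Rightarrow> ('g list \<Rightarrow> 'g) \<times> ('g list \<Rightarrow> 'g)" where
  "delta_bar1 scale br D f = (ce_diff scale br (ad br) f, T_op scale D f)"

end

theory Submission imports Defs begin

definition LL :: "('g::ab_group_add \<Rightarrow> 'g \<Rightarrow> 'g) \<Rightarrow> ('g \<Rightarrow> 'g \<Rightarrow> 'g) \<Rightarrow> 'g \<Rightarrow> ('g list \<Rightarrow> 'g) \<Rightarrow> 'g list \<Rightarrow> 'g" where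
  "LL br rho x f xs = rho x (f xs) - (\<Sum>j<length xs. f (xs[j := br x (xs ! j)]))"

primrec dd :: "('g::ab_group_add \<Rightarrow> 'g \<Rightarrow> 'g) \<Rightarrow> ('g \<Rightarrow> 'g \<Rightarrow> 'g) \<Rightarrow> ('g list \<Rightarrow> 'g) \<Rightarrow> 'g list \<Rightarrow> 'g" where
  "dd br rho f [] = 0"
| "dd br rho f (x # xs) = LL br rho x f xs - dd br rho (\<lambda>ys. f (x # ys)) xs"

definition madd :: "('g::ab_group_add list \<Rightarrow> 'g) \<Rightarrow> bool" where
  "madd f \<longleftrightarrow> (\<forall>xs i a b. i < length xs \<longrightarrow> f (xs[i := a + b]) = f (xs[i := a]) + f (xs[i := b]))"

definition aalt :: "('g::ab_group_add list \<Rightarrow> 'g) \<Rightarrow> bool" where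
  "aalt f \<longleftrightarrow> (\<forall>xs i. Suc i < length xs \<longrightarrow> xs ! i = xs ! Suc i \<longrightarrow> f xs = 0)"

definition addf :: "('g::ab_group_add \<Rightarrow> 'g) \<Rightarrow> bool" where
  "addf h \<longleftrightarrow> (\<forall>a b. h (a + b) = h a + h b)"

lemma addf_zero: "addf h \<Longrightarrow> h 0 = 0"
  unfolding addf_def by (metis add_cancel_right_right)
lemma addf_minus: "addf h \<Longrightarrow> h (- a) = - h a"
  using addf_zero[of h] unfolding addf_def by (metis add.right_inverse eq_neg_iff_add_eq_0)
lemma addf_diff: "addf h \<Longrightarrow> h (a - b) = h a - h b"
  by (metis addf_def addf_minus diff_conv_add_uminus)
lemma addf_sum: "addf h \<Longrightarrow> h (sum g A) = (\<Sum>x\<in>A. h (g x))"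
  by (induct A rule: infinite_finite_induct) (simp_all add: addf_zero, simp add: addf_def)

lemma madd_zero: "madd f \<Longrightarrow> i < length xs \<Longrightarrow> f (xs[i := 0]) = 0"
  unfolding madd_def by (metis add_0 add_cancel_right_right)
lemma madd_minus: "madd f \<Longrightarrow> i < length xs \<Longrightarrow> f (xs[i := - a]) = - f (xs[i := a])"
  using madd_zero[of f i xs] unfolding madd_def
  by (metis add.right_inverse eq_neg_iff_add_eq_0)
lemma madd_diff: "madd f \<Longrightarrow> i < length xs \<Longrightarrow> f (xs[i := a - b]) = f (xs[i := a]) - f (xs[i := b])"
  using madd_minus[of f i xs b] unfolding madd_def
  by (metis diff_conv_add_uminus)

lemma dd_add: "dd br rho (\<lambda>ys. f ys + g ys) xs = dd br rho f xs + dd br rho g xs"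
  if "\<And>x. addf (rho x)"
proof (induction xs arbitrary: f g)
  case Nil then show ?case by simp
next
  case (Cons x xs)
  have "LL br rho x (\<lambda>ys. f ys + g ys) xs = LL br rho x f xs + LL br rho x g xs"
    using that unfolding LL_def addf_def by (simp add: sum.distrib algebra_simps)
  then show ?case using Cons[of "\<lambda>ys. f (x # ys)" "\<lambda>ys. g (x # ys)"] by simp
qed

lemma dd_zero: "dd br rho (\<lambda>ys. 0) xs = 0"
  if "\<And>x. addf (rho x)"
  using dd_add[where f="\<lambda>ys. 0" and g="\<lambda>ys. 0", OF that]  by simp

lemma dd_map2: "dd br rho' (\<lambda>ys. h (f ys)) xs = h (dd br rho f xs)"
  if "\<And>x u. rho' x (h u) = h (rho x u)" "addf h"
proof (induction xs arbitrary: f)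
  case Nil then show ?case using addf_zero[OF that(2)] by simp
next
  case (Cons x xs)
  have "LL br rho' x (\<lambda>ys. h (f ys)) xs = h (LL br rho x f xs)"
    unfolding LL_def using that by (simp add: addf_diff addf_sum)
  then show ?case using Cons[of "\<lambda>ys. f (x # ys)"] that by (simp add: addf_diff)
qed

lemma dd_map: "dd br rho (\<lambda>ys. h (f ys)) xs = h (dd br rho f xs)"
  if "\<And>x u. rho x (h u) = h (rho x u)" "addf h"
  by (rule dd_map2) (use that in auto)

lemma dd_minus: "dd br rho (\<lambda>ys. f ys - g ys) xs = dd br rho f xs - dd br rho g xs"
  if "\<And>x. addf (rho x)"
proof -
  have "addf uminus" by (simp add: addf_def)
  have m: "dd br rho (\<lambda>ys. - g ys) xs = - dd br rho g xs"
    by (rule dd_map) (use that \<open>addf uminus\<close> addf_minus in auto)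
  show ?thesis using dd_add[where g="\<lambda>ys. - g ys", OF that] m by simp
qed

lemma madd_iota: "madd f \<Longrightarrow> madd (\<lambda>ys. f (x # ys))"
  unfolding madd_def
proof (intro allI impI)
  fix xs i a b assume "\<forall>xs i a b. i < length xs \<longrightarrow> f (xs[i := a + b]) = f (xs[i := a]) + f (xs[i := b])"
    and "i < length (xs::'a list)"
  then show "f (x # xs[i := a + b]) = f (x # xs[i := a]) + f (x # xs[i := b])"
    by (metis Suc_less_eq length_Cons list_update_code(3))
qed

lemma aalt_iota: "aalt f \<Longrightarrow> aalt (\<lambda>ys. f (x # ys))"
  unfolding aalt_def
proof (intro allI impI)
  fix xs i assume "\<forall>xs i. Suc i < length xs \<longrightarrow> xs ! i = xs ! Suc i \<longrightarrow> f xs = 0"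
    "Suc i < length (xs::'a list)" "xs ! i = xs ! Suc i"
  then show "f (x # xs) = 0"
    by (metis Suc_less_eq length_Cons nth_Cons_Suc)
qed

locale liebr =
  fixes br :: "'g::ab_group_add \<Rightarrow> 'g \<Rightarrow> 'g"
  assumes br_add1: "br (a + b) c = br a c + br b c"
    and br_add2: "br a (b + c) = br a b + br a c"
    and br_alt: "br a a = 0"
    and br_jac: "br x (br y z) + br y (br z x) + br z (br x y) = 0"
begin

lemma addf_br1: "addf (\<lambda>a. br a c)" by (simp add: addf_def br_add1)
lemma addf_br2: "addf (br a)" by (simp add: addf_def br_add2)

lemma br_anti: "br a b = - br b a"
proof -
  have "br (a + b) (a + b) = br a a + br a b + (br b a + br b b)" by (simp only: br_add1 br_add2 ac_simps)
  then have "br a b + br b a = 0" by (simp add: br_alt)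
  then show ?thesis by (simp add: eq_neg_iff_add_eq_0)
qed

lemma br_jac2: "br x (br y z) - br y (br x z) = br (br x y) z"
proof -
  have "br y (br z x) = - br y (br x z)" using br_anti[of z x] addf_minus[OF addf_br2] by simp
  moreover have "br z (br x y) = - br (br x y) z" by (rule br_anti)
  moreover have "br x (br y z) = - (br y (br z x) + br z (br x y))"
    using br_jac[of x y z] by (subst eq_neg_iff_add_eq_0) (simp only: add.assoc)
  ultimately show ?thesis by simp
qed

definition isrep :: "('g \<Rightarrow> 'g \<Rightarrow> 'g) \<Rightarrow> bool" where
  "isrep rho \<longleftrightarrow> (\<forall>x. addf (rho x)) \<and> (\<forall>a b c. rho (a + b) c = rho a c + rho b c)
     \<and> (\<forall>x y v. rho x (rho y v) - rho y (rho x v) = rho (br x y) v)"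

lemma upd_term: "j < length xs \<Longrightarrow> xs[i:=c, j := br x (xs[i:=c]!j)] =
   (if j = i then xs[i := br x c] else xs[j := br x (xs!j), i:=c])"
  by (auto simp: list_update_swap nth_list_update)

lemma madd_LL: assumes "isrep rho" "madd f" shows "madd (LL br rho x f)"
  unfolding madd_def
proof (intro allI impI)
  fix xs :: "'g list" and i a b assume i: "i < length xs"
  have t: "f (xs[i:=a+b, j := br x (xs[i:=a+b]!j)]) = f (xs[i:=a, j := br x (xs[i:=a]!j)]) + f (xs[i:=b, j := br x (xs[i:=b]!j)])"
    if "j < length xs" for j
    using that i assms(2) unfolding upd_term[OF that] madd_def by (simp add: br_add2)
  have r: "rho x (f (xs[i:=a+b])) = rho x (f (xs[i := a])) + rho x (f (xs[i := b]))"
    using assms i unfolding isrep_def madd_def addf_def by simp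
  show "LL br rho x f (xs[i := a + b]) = LL br rho x f (xs[i := a]) + LL br rho x f (xs[i := b])"
    unfolding LL_def using t r by (simp add: sum.distrib)
qed

lemma madd_dd_aux: assumes "isrep rho" shows "madd f \<Longrightarrow> i < length xs \<Longrightarrow> dd br rho f (xs[i := a + b]) = dd br rho f (xs[i := a]) + dd br rho f (xs[i := b])"
  proof (induction xs arbitrary: f i)
    case Nil then show ?case by simp
  next
    case (Cons y ys)
    show ?case
    proof (cases i)
      case 0
      have ra: "\<And>x. addf (rho x)" using assms unfolding isrep_def by auto
      have l: "LL br rho (a+b) f ys = LL br rho a f ys + LL br rho b f ys"
        using assms unfolding LL_def isrep_def by (simp add: br_add1 sum.distrib \<open>madd f\<close>[unfolded madd_def, rule_format])
      have "dd br rho (\<lambda>zs. f ((a+b) # zs)) ys = dd br rho (\<lambda>zs. f (a # zs) + f (b # zs)) ys"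
        by (metis Cons.prems(1) length_Cons list_update_code(2) madd_def zero_less_Suc)
      also have "\<dots> = dd br rho (\<lambda>zs. f (a # zs)) ys + dd br rho (\<lambda>zs. f (b # zs)) ys"
        by (rule dd_add[OF ra])
      finally show ?thesis using 0 l by simp
    next
      case (Suc k)
      have k: "k < length ys" using Cons.prems Suc by simp
      have "madd (LL br rho y f)" by (rule madd_LL[OF assms Cons.prems(1)])
      then have l: "LL br rho y f (ys[k:=a+b]) = LL br rho y f (ys[k:=a]) + LL br rho y f (ys[k:=b])"
        using k unfolding madd_def by simp
      have "dd br rho (\<lambda>zs. f (y # zs)) (ys[k:=a+b]) = dd br rho (\<lambda>zs. f (y # zs)) (ys[k:=a]) + dd br rho (\<lambda>zs. f (y # zs)) (ys[k:=b])"
        by (rule Cons.IH[OF madd_iota[OF Cons.prems(1)] k])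
      then show ?thesis using l Suc by simp
    qed
  qed

lemma madd_dd: "isrep rho \<Longrightarrow> madd f \<Longrightarrow> madd (dd br rho f)"
  using madd_dd_aux unfolding madd_def[of "dd br rho f"] by blast


lemma as_lemma: assumes "madd f" "aalt f" "Suc i < length xs"
  shows "f (xs[i := b, Suc i := a]) = - f (xs[i := a, Suc i := b])"
proof -
  define g where "g u v = f (xs[i:=u, Suc i:=v])" for u v
  have g1: "g (u+u') v = g u v + g u' v" for u u' v
  proof -
    have "xs[i:=w, Suc i:=v] = xs[Suc i:=v, i:=w]" for w by (simp add: list_update_swap)
    then show ?thesis unfolding g_def using assms(1,3) unfolding madd_def by simp
  qed
  have g2: "g u (v+v') = g u v + g u v'" for u v v'
    unfolding g_def using assms(1,3) unfolding madd_def by simp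
  have g0: "g u u = 0" for u
    unfolding g_def using assms(2,3) unfolding aalt_def by simp
  have "0 = g (a+b) (a+b)" using g0 by simp
  also have "\<dots> = g a a + g a b + (g b a + g b b)" by (simp only: g1 g2 ac_simps)
  also have "\<dots> = g a b + g b a" using g0 by simp
  finally show ?thesis unfolding g_def by (simp add: eq_neg_iff_add_eq_0 add.commute)
qed

lemma aalt_LL: assumes "isrep rho" "madd f" "aalt f" shows "aalt (LL br rho x f)"
  unfolding aalt_def
proof (intro allI impI)
  fix xs :: "'g list" and i assume i: "Suc i < length xs" and e: "xs ! i = xs ! Suc i"
  define c where "c = xs ! i"
  have r: "rho x (f xs) = 0" using assms i e unfolding aalt_def isrep_def by (simp add: addf_zero)
  define t where "t j = f (xs[j := br x (xs ! j)])" for j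
  have t0: "t j = 0" if "j < length xs" "j \<noteq> i" "j \<noteq> Suc i" for j
    unfolding t_def using assms(3) i e that unfolding aalt_def by (simp add: nth_list_update)
  have xs1: "xs[i := br x c] = xs[i := br x c, Suc i := c]" using e c_def i
    by (metis list_update_id list_update_overwrite list_update_swap n_not_Suc_n)
  have xs2: "xs[Suc i := br x c] = xs[i := c, Suc i := br x c]" using e c_def i
    by (metis list_update_id)
  have "t i + t (Suc i) = 0"
    unfolding t_def using as_lemma[OF assms(2,3) i, of "br x c" c] e c_def xs1 xs2 by simp
  have "(\<Sum>j<length xs. t j) = (\<Sum>j\<in>{i, Suc i}. t j)"
    by (rule sum.mono_neutral_right) (use i t0 in auto)
  also have "\<dots> = 0" using \<open>t i + t (Suc i) = 0\<close> by simp
  finally show "LL br rho x f xs = 0" unfolding LL_def t_def r by simp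
qed

lemma aalt_dd_aux: assumes "isrep rho" shows "madd f \<Longrightarrow> aalt f \<Longrightarrow> Suc i < length xs \<Longrightarrow> xs ! i = xs ! Suc i \<Longrightarrow> dd br rho f xs = 0"
proof (induction xs arbitrary: f i)
  case Nil then show ?case by simp
next
  case (Cons y ys)
  have ra: "\<And>x. addf (rho x)" using assms unfolding isrep_def by auto
  show ?case
  proof (cases i)
    case 0
    then obtain ws where ys: "ys = y # ws" using Cons.prems(3,4)
      by (cases ys) auto
    have z: "(\<lambda>zs. f (y # y # zs)) = (\<lambda>zs. 0)"
      using Cons.prems(2) unfolding aalt_def by force
    have "LL br rho y f (y # ws) = LL br rho y (\<lambda>zs. f (y # zs)) ws"
    proof -
      have "f (br y y # ws) = 0" using br_alt madd_zero[OF Cons.prems(1), of 0 "y # ws"] by simp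
      then show ?thesis unfolding LL_def by (simp add: lessThan_Suc_eq_insert_0 sum.reindex)
    qed
    then show ?thesis using ys z dd_zero[OF ra] by simp
  next
    case (Suc k)
    have "LL br rho y f ys = 0" using aalt_LL[OF assms Cons.prems(1,2)] Cons.prems(3,4) Suc
      unfolding aalt_def by simp
    moreover have "dd br rho (\<lambda>zs. f (y # zs)) ys = 0"
      using Cons.IH[OF madd_iota[OF Cons.prems(1)] aalt_iota[OF Cons.prems(2)]] Cons.prems(3,4) Suc by simp
    ultimately show ?thesis by simp
  qed
qed

lemma aalt_dd: "isrep rho \<Longrightarrow> madd f \<Longrightarrow> aalt f \<Longrightarrow> aalt (dd br rho f)"
  using aalt_dd_aux unfolding aalt_def[of "dd br rho f"] by blast


lemma LL_expand: assumes "isrep rho"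
  shows "LL br rho x (LL br rho y f) zs = rho x (rho y (f zs)) - (\<Sum>j<length zs. rho x (f (zs[j := br y (zs!j)])))
     - (\<Sum>k<length zs. rho y (f (zs[k := br x (zs!k)])))
     + (\<Sum>k<length zs. \<Sum>j<length zs. f (zs[k := br x (zs!k), j := br y (zs[k := br x (zs!k)] ! j)]))"
proof -
  have a: "addf (rho x)" using assms unfolding isrep_def by auto
  show ?thesis unfolding LL_def using a
    by (simp add: addf_diff addf_sum sum_subtractf algebra_simps)
qed

lemma LL_comm: assumes "isrep rho" "madd f"
  shows "LL br rho x (LL br rho y f) zs - LL br rho y (LL br rho x f) zs = LL br rho (br x y) f zs"
proof -
  define A where "A x y k j = f (zs[k := br x (zs!k), j := br y (zs[k := br x (zs!k)] ! j)])" for x y k j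
  define n where "n = length zs"
  have r: "rho x (rho y v) - rho y (rho x v) = rho (br x y) v" for v using assms(1) unfolding isrep_def by auto
  have sw: "(\<Sum>k<n. \<Sum>j<n. A y x k j) = (\<Sum>k<n. \<Sum>j<n. A y x j k)"
    by (rule sum.swap)
  have t: "A x y k j - A y x j k = (if j = k then - f (zs[k := br (br x y) (zs!k)]) else 0)"
    if "k < n" "j < n" for k j
  proof (cases "j = k")
    case True
    have "A x y k j - A y x j k = f (zs[k := br y (br x (zs!k))]) - f (zs[k := br x (br y (zs!k))])"
      unfolding A_def using True that n_def by simp
    also have "\<dots> = f (zs[k := br y (br x (zs!k)) - br x (br y (zs!k))])"
      using madd_diff[OF assms(2)] that n_def by simp
    also have "br y (br x (zs!k)) - br x (br y (zs!k)) = - br (br x y) (zs!k)"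
      using br_jac2[of x y "zs!k"] by (metis minus_diff_eq)
    finally show ?thesis using True madd_minus[OF assms(2)] that n_def by simp
  next
    case False
    then show ?thesis unfolding A_def using that n_def by (simp add: list_update_swap)
  qed
  have "(\<Sum>k<n. \<Sum>j<n. A x y k j) - (\<Sum>k<n. \<Sum>j<n. A y x k j)
      = (\<Sum>k<n. \<Sum>j<n. A x y k j - A y x j k)" using sw by (simp add: sum_subtractf)
  also have "\<dots> = (\<Sum>k<n. \<Sum>j<n. (if j = k then - f (zs[k := br (br x y) (zs!k)]) else 0))"
    using t by simp
  also have "\<dots> = - (\<Sum>k<n. f (zs[k := br (br x y) (zs!k)]))"
    by (simp add: sum.delta sum_negf)
  finally have d: "(\<Sum>k<n. \<Sum>j<n. A x y k j) - (\<Sum>k<n. \<Sum>j<n. A y x k j) = - (\<Sum>k<n. f (zs[k := br (br x y) (zs!k)]))" .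
  have g: "(a - s1 - s2 + p) - (b - s2 - s1 + q) = (a - b) + (p - q)" for a b s1 s2 p q :: 'g
    by (simp add: algebra_simps)
  show ?thesis
    unfolding LL_expand[OF assms(1)] g using d r[of "f zs"] unfolding A_def n_def LL_def
    by simp
qed


lemma LL_Cons: "LL br rho x f (y # ws) = rho x (f (y # ws)) - f (br x y # ws)
    - (\<Sum>j<length ws. f (y # ws[j := br x (ws ! j)]))"
  unfolding LL_def length_Cons sum.lessThan_Suc_shift by (simp add: algebra_simps)

lemma iota_LL: "(\<lambda>ws. LL br rho x f (y # ws)) = (\<lambda>ws. LL br rho x (\<lambda>zs. f (y # zs)) ws - f (br x y # ws))"
  unfolding LL_Cons by (simp add: LL_def algebra_simps)

lemma LL_dd_comm: assumes "isrep rho" shows "madd f \<Longrightarrow> LL br rho x (dd br rho f) zs = dd br rho (LL br rho x f) zs"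
proof (induction zs arbitrary: f)
  case Nil
  have "addf (rho x)" using assms unfolding isrep_def by auto
  then show ?case unfolding LL_def by (simp add: addf_zero)
next
  case (Cons y ys)
  have ra: "\<And>x. addf (rho x)" using assms unfolding isrep_def by auto
  define g where "g = (\<lambda>zs. f (y # zs))"
  define h where "h = (\<lambda>zs. f (br x y # zs))"
  have mg: "madd g" unfolding g_def by (rule madd_iota[OF Cons.prems])
  have L: "LL br rho x (dd br rho f) (y # ys) = LL br rho x (LL br rho y f) ys - LL br rho x (dd br rho g) ys
      - LL br rho (br x y) f ys + dd br rho h ys"
  proof -
    have e1: "LL br rho x (dd br rho f) (y # ys) = rho x (LL br rho y f ys - dd br rho g ys)
       - (LL br rho (br x y) f ys - dd br rho h ys)
       - (\<Sum>j<length ys. LL br rho y f (ys[j := br x (ys ! j)]) - dd br rho g (ys[j := br x (ys ! j)]))"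
      unfolding LL_Cons g_def h_def by simp
    have U: "LL br rho x (LL br rho y f) ys = rho x (LL br rho y f ys) - (\<Sum>j<length ys. LL br rho y f (ys[j := br x (ys ! j)]))"
      by (simp add: LL_def[of br rho x "LL br rho y f"])
    have V: "LL br rho x (dd br rho g) ys = rho x (dd br rho g ys) - (\<Sum>j<length ys. dd br rho g (ys[j := br x (ys ! j)]))"
      by (simp add: LL_def[of br rho x "dd br rho g"])
    have rr: "rho x (LL br rho y f ys - dd br rho g ys) = rho x (LL br rho y f ys) - rho x (dd br rho g ys)"
      using ra[of x] by (simp add: addf_diff)
    have g: "\<And>p q b h s t::'g. (p - q) - (b - h) - (s - t) = (p - s) - (q - t) - b + h"
      by (simp add: algebra_simps)
    have "LL br rho x (dd br rho f) (y # ys) = (rho x (LL br rho y f ys) - rho x (dd br rho g ys))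
       - (LL br rho (br x y) f ys - dd br rho h ys)
       - ((\<Sum>j<length ys. LL br rho y f (ys[j := br x (ys ! j)])) - (\<Sum>j<length ys. dd br rho g (ys[j := br x (ys ! j)])))"
      unfolding e1 rr sum_subtractf ..
    also have "\<dots> = (rho x (LL br rho y f ys) - (\<Sum>j<length ys. LL br rho y f (ys[j := br x (ys ! j)])))
       - (rho x (dd br rho g ys) - (\<Sum>j<length ys. dd br rho g (ys[j := br x (ys ! j)])))
       - LL br rho (br x y) f ys + dd br rho h ys" by (rule g)
    also have "\<dots> = LL br rho x (LL br rho y f) ys - LL br rho x (dd br rho g) ys
      - LL br rho (br x y) f ys + dd br rho h ys" unfolding U V ..
    finally show ?thesis .
  qed
  have i: "(\<lambda>ws. LL br rho x f (y # ws)) = (\<lambda>ws. LL br rho x g ws - h ws)"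
    unfolding iota_LL g_def h_def ..
  have R: "dd br rho (LL br rho x f) (y # ys) = LL br rho y (LL br rho x f) ys - LL br rho x (dd br rho g) ys + dd br rho h ys"
  proof -
    have "dd br rho (LL br rho x f) (y # ys) = LL br rho y (LL br rho x f) ys - dd br rho (\<lambda>ws. LL br rho x g ws - h ws) ys"
      using i by simp
    also have "dd br rho (\<lambda>ws. LL br rho x g ws - h ws) ys = dd br rho (LL br rho x g) ys - dd br rho h ys"
      by (rule dd_minus[OF ra])
    also have "dd br rho (LL br rho x g) ys = LL br rho x (dd br rho g) ys"
      by (rule Cons.IH[OF mg, symmetric])
    finally show ?thesis by simp
  qed
  have c: "LL br rho x (LL br rho y f) ys - LL br rho y (LL br rho x f) ys = LL br rho (br x y) f ys"
    by (rule LL_comm[OF assms Cons.prems])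
  show ?case unfolding L R using c by (simp add: algebra_simps)
qed

lemma dd_dd: assumes "isrep rho" shows "madd f \<Longrightarrow> dd br rho (dd br rho f) zs = 0"
proof (induction zs arbitrary: f)
  case Nil then show ?case by simp
next
  case (Cons x xs)
  have ra: "\<And>x. addf (rho x)" using assms unfolding isrep_def by auto
  define g where "g = (\<lambda>zs. f (x # zs))"
  have mg: "madd g" unfolding g_def by (rule madd_iota[OF Cons.prems])
  have i: "(\<lambda>ys. dd br rho f (x # ys)) = (\<lambda>ys. LL br rho x f ys - dd br rho g ys)"
    unfolding g_def by simp
  have "dd br rho (dd br rho f) (x # xs) = LL br rho x (dd br rho f) xs - dd br rho (\<lambda>ys. LL br rho x f ys - dd br rho g ys) xs"
    using i by simp
  also have "\<dots> = LL br rho x (dd br rho f) xs - (dd br rho (LL br rho x f) xs - dd br rho (dd br rho g) xs)"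
    using dd_minus[OF ra] by simp
  also have "\<dots> = 0" using LL_dd_comm[OF assms Cons.prems] Cons.IH[OF mg] by simp
  finally show ?case .
qed


lemma del_nth_0[simp]: "del_nth 0 (x # xs) = xs" by (simp add: del_nth_def)
lemma del_nth_Suc[simp]: "del_nth (Suc i) (x # xs) = x # del_nth i xs" by (simp add: del_nth_def)
lemma length_del_nth[simp]: "i < length xs \<Longrightarrow> length (del_nth i xs) = length xs - 1"
  by (simp add: del_nth_def)

lemma swap01: assumes "madd f" "aalt f" shows "f (a # b # r) = - f (b # a # r)"
  using as_lemma[OF assms, of 0 "b # a # r" a b] by simp

lemma move_lemma: assumes "vector_space scale"
  shows "madd f \<Longrightarrow> aalt f \<Longrightarrow> j < length xs \<Longrightarrow> f (a # del_nth j xs) = scale ((-1) ^ j) (f (xs[j := a]))"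
proof (induction j arbitrary: xs f)
  case 0
  interpret vector_space scale by fact
  from 0 obtain y ys where "xs = y # ys" by (cases xs) auto
  then show ?case by simp
next
  case (Suc k)
  interpret vector_space scale by fact
  from Suc.prems obtain y ys where xs: "xs = y # ys" by (cases xs) auto
  have k: "k < length ys" using Suc.prems xs by simp
  have "f (a # del_nth (Suc k) xs) = - f (y # a # del_nth k ys)"
    unfolding xs del_nth_Suc by (rule swap01[OF Suc.prems(1,2)])
  also have "f (y # a # del_nth k ys) = scale ((-1) ^ k) (f (y # ys[k := a]))"
    using Suc.IH[OF madd_iota[OF Suc.prems(1)] aalt_iota[OF Suc.prems(2)] k] by simp
  finally show ?case unfolding xs by simp
qed

lemma cartan: assumes "vector_space scale" "madd f" "aalt f"
  shows "ce_diff scale br rho f (x # xs) = LL br rho x f xs - ce_diff scale br rho (\<lambda>ys. f (x # ys)) xs"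
proof -
  interpret vector_space scale by fact
  define n where "n = length xs"
  have S1: "(\<Sum>i<length (x # xs). scale ((-1) ^ i) (rho ((x # xs) ! i) (f (del_nth i (x # xs)))))
     = rho x (f xs) - (\<Sum>i<n. scale ((-1) ^ i) (rho (xs ! i) (f (x # del_nth i xs))))"
    unfolding length_Cons sum.lessThan_Suc_shift n_def by (simp add: sum_negf)
  have S2a: "(\<Sum>j\<in>{Suc 0..<length (x # xs)}. scale ((-1) ^ (0 + j)) (f (br ((x # xs) ! 0) ((x # xs) ! j) # del_nth 0 (del_nth j (x # xs)))))
     = - (\<Sum>j<n. f (xs[j := br x (xs ! j)]))"
  proof -
    have "(\<Sum>j\<in>{Suc 0..<length (x # xs)}. scale ((-1) ^ (0 + j)) (f (br ((x # xs) ! 0) ((x # xs) ! j) # del_nth 0 (del_nth j (x # xs)))))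
      = (\<Sum>j\<in>{0..<n}. scale ((-1) ^ Suc j) (f (br x (xs ! j) # del_nth j xs)))"
      unfolding length_Cons sum.shift_bounds_Suc_ivl n_def by simp
    also have "\<dots> = (\<Sum>j<n. - f (xs[j := br x (xs ! j)]))"
      using move_lemma[OF assms] n_def by (simp add: atLeast0LessThan)
    finally show ?thesis by (simp add: sum_negf)
  qed
  have S2b: "(\<Sum>i<n. \<Sum>j\<in>{Suc (Suc i)..<length (x # xs)}. scale ((-1) ^ (Suc i + j)) (f (br ((x # xs) ! Suc i) ((x # xs) ! j) # del_nth (Suc i) (del_nth j (x # xs)))))
     = - (\<Sum>i<n. \<Sum>j\<in>{Suc i..<n}. scale ((-1) ^ (i + j)) (f (x # br (xs ! i) (xs ! j) # del_nth i (del_nth j xs))))"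
  proof -
    have "(\<Sum>i<n. \<Sum>j\<in>{Suc (Suc i)..<length (x # xs)}. scale ((-1) ^ (Suc i + j)) (f (br ((x # xs) ! Suc i) ((x # xs) ! j) # del_nth (Suc i) (del_nth j (x # xs)))))
      = (\<Sum>i<n. \<Sum>j\<in>{Suc i..<n}. scale ((-1) ^ (Suc i + Suc j)) (f (br (xs ! i) (xs ! j) # x # del_nth i (del_nth j xs))))"
      unfolding length_Cons sum.shift_bounds_Suc_ivl n_def by simp
    also have "\<dots> = (\<Sum>i<n. \<Sum>j\<in>{Suc i..<n}. - scale ((-1) ^ (i + j)) (f (x # br (xs ! i) (xs ! j) # del_nth i (del_nth j xs))))"
    proof -
      have sw: "\<And>c r. f (c # x # r) = - f (x # c # r)" using swap01[OF assms(2,3)] by blast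
      show ?thesis by (intro sum.cong refl) (simp only: sw power_Suc add_Suc add_Suc_right mult_minus_left mult_1_left minus_minus scale_minus_left scale_minus_right)
    qed
    finally show ?thesis by (simp add: sum_negf)
  qed
  have S2: "(\<Sum>i<length (x # xs). \<Sum>j\<in>{Suc i..<length (x # xs)}. scale ((-1) ^ (i + j)) (f (br ((x # xs) ! i) ((x # xs) ! j) # del_nth i (del_nth j (x # xs)))))
     = - (\<Sum>j<n. f (xs[j := br x (xs ! j)]))
       - (\<Sum>i<n. \<Sum>j\<in>{Suc i..<n}. scale ((-1) ^ (i + j)) (f (x # br (xs ! i) (xs ! j) # del_nth i (del_nth j xs))))"
    using S2a S2b unfolding length_Cons[of x xs] sum.lessThan_Suc_shift[where n = "length xs"] n_def
    by simp
  define P where "P = rho x (f xs)"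
  define A where "A = (\<Sum>i<n. scale ((-1) ^ i) (rho (xs ! i) (f (x # del_nth i xs))))"
  define S where "S = (\<Sum>j<n. f (xs[j := br x (xs ! j)]))"
  define B where "B = (\<Sum>i<n. \<Sum>j\<in>{Suc i..<n}. scale ((-1) ^ (i + j)) (f (x # br (xs ! i) (xs ! j) # del_nth i (del_nth j xs))))"
  have L: "ce_diff scale br rho f (x # xs) = (P - A) + (- S - B)"
    unfolding ce_diff_def[of scale br rho f] S1 S2 P_def A_def S_def B_def ..
  have R: "LL br rho x f xs - ce_diff scale br rho (\<lambda>ys. f (x # ys)) xs = (P - S) - (A + B)"
    unfolding LL_def ce_diff_def P_def A_def S_def B_def n_def by simp
  have g: "\<And>p a s b :: 'g. (p - a) + (- s - b) = (p - s) - (a + b)" by (simp add: algebra_simps)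
  show ?thesis unfolding L R g ..
qed


lemma ce_dd: assumes "vector_space scale"
  shows "madd f \<Longrightarrow> aalt f \<Longrightarrow> ce_diff scale br rho f xs = dd br rho f xs"
proof (induction xs arbitrary: f)
  case Nil then show ?case by (simp add: ce_diff_def)
next
  case (Cons x xs)
  show ?case using cartan[OF assms Cons.prems] Cons.IH[OF madd_iota[OF Cons.prems(1)] aalt_iota[OF Cons.prems(2)]]
    by simp
qed

lemma dd_pull: assumes "\<And>x u. rho' x u = rho (phi x) u" "\<And>a b. br (phi a) (phi b) = phi (br a b)"
  shows "dd br rho' (\<lambda>ys. g (map phi ys)) zs = dd br rho g (map phi zs)"
proof (induction zs arbitrary: g)
  case Nil then show ?case by simp
next
  case (Cons x xs)
  have "LL br rho' x (\<lambda>ys. g (map phi ys)) xs = LL br rho (phi x) g (map phi xs)"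
    unfolding LL_def using assms by (simp add: map_update)
  then show ?case using Cons[of "\<lambda>ys. g (phi x # ys)"] by simp
qed

end

lemma ce_local: assumes "\<And>zs. length zs + 1 = length xs \<Longrightarrow> f zs = g zs"
  shows "ce_diff scale br rho f xs = ce_diff scale br rho g xs"
proof -
  have a: "f (del_nth i xs) = g (del_nth i xs)" if "i < length xs" for i
    using assms[of "del_nth i xs"] that by (simp add: del_nth_def)
  have b: "f (br (xs ! i) (xs ! j) # del_nth i (del_nth j xs)) = g (br (xs ! i) (xs ! j) # del_nth i (del_nth j xs))"
    if "i < length xs" "j \<in> {Suc i..<length xs}" for i j
  proof -
    have "length (del_nth i (del_nth j xs)) = length xs - 2" using that by (simp add: del_nth_def)
    moreover have "Suc (Suc (length xs - 2)) = length xs" using that by auto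
    ultimately show ?thesis using assms[of "br (xs ! i) (xs ! j) # del_nth i (del_nth j xs)"] by simp
  qed
  show ?thesis unfolding ce_diff_def using a b by (intro arg_cong2[where f="(+)"] sum.cong refl) auto
qed

lemma T_local: assumes "\<And>zs. length zs = length xs \<Longrightarrow> f zs = g zs"
  shows "T_op scale D f xs = T_op scale D g xs"
  unfolding T_op_def using assms by (simp add: apply_D_at_def)

lemma ce_add: assumes "vector_space scale" "\<And>x. addf (rho x)"
  shows "ce_diff scale br rho (\<lambda>zs. g zs + h zs) xs = ce_diff scale br rho g xs + ce_diff scale br rho h xs"
proof -
  interpret vector_space scale by fact
  show ?thesis unfolding ce_diff_def using assms(2)
    by (simp add: addf_def scale_right_distrib sum.distrib algebra_simps)
qed

definition pref :: "('g \<Rightarrow> 'g) \<Rightarrow> nat \<Rightarrow> 'g list \<Rightarrow> 'g list" where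
  "pref phi k xs = map (\<lambda>i. if i < k then phi (xs ! i) else xs ! i) [0..<length xs]"

lemma subset_sum_aux: assumes "madd g" "addf D"
  shows "k \<le> length xs \<Longrightarrow> (\<Sum>S\<in>Pow {..<k}. g (apply_D_at D S xs)) = g (pref (\<lambda>x. x + D x) k xs)"
proof (induction k arbitrary: xs)
  case 0
  have "apply_D_at D {} xs = xs" unfolding apply_D_at_def by (simp add: map_nth)
  moreover have "pref (\<lambda>x. x + D x) 0 xs = xs" unfolding pref_def by (simp add: map_nth)
  ultimately show ?case by simp
next
  case (Suc k)
  have k: "k < length xs" using Suc.prems by simp
  define ys where "ys = xs[k := D (xs ! k)]"
  have P: "Pow {..<Suc k} = Pow {..<k} \<union> insert k ` Pow {..<k}"
    by (simp add: lessThan_Suc Pow_insert)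
  have inj: "inj_on (insert k) (Pow {..<k})"
    by (rule inj_onI) (metis PowD insert_ident lessThan_iff less_irrefl subset_iff)
  have ap: "apply_D_at D (insert k S) xs = apply_D_at D S ys" if "S \<in> Pow {..<k}" for S
    using that k unfolding apply_D_at_def ys_def by (intro nth_equalityI) (auto simp: nth_list_update)
  have "(\<Sum>S\<in>Pow {..<Suc k}. g (apply_D_at D S xs)) = (\<Sum>S\<in>Pow {..<k}. g (apply_D_at D S xs))
      + (\<Sum>S\<in>insert k ` Pow {..<k}. g (apply_D_at D S xs))"
    unfolding P by (rule sum.union_disjoint) auto
  also have "(\<Sum>S\<in>insert k ` Pow {..<k}. g (apply_D_at D S xs)) = (\<Sum>S\<in>Pow {..<k}. g (apply_D_at D S ys))"
    using ap by (simp add: sum.reindex[OF inj])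
  also have "\<dots> = g (pref (\<lambda>x. x + D x) k ys)" using Suc.IH[of ys] k unfolding ys_def by simp
  also have "(\<Sum>S\<in>Pow {..<k}. g (apply_D_at D S xs)) = g (pref (\<lambda>x. x + D x) k xs)" using Suc.IH[of xs] k by simp
  also have "pref (\<lambda>x. x + D x) k ys = (pref (\<lambda>x. x + D x) k xs)[k := D (xs ! k)]"
    unfolding pref_def ys_def by (intro nth_equalityI) (auto simp: nth_list_update)
  also have "pref (\<lambda>x. x + D x) k xs = (pref (\<lambda>x. x + D x) k xs)[k := xs ! k]"
    unfolding pref_def using k by (intro nth_equalityI) (auto simp: nth_list_update)
  also have "g ((pref (\<lambda>x. x + D x) k xs)[k := xs ! k]) + g ((pref (\<lambda>x. x + D x) k xs)[k := xs ! k, k := D (xs ! k)])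
     = g ((pref (\<lambda>x. x + D x) k xs)[k := xs ! k + D (xs ! k)])"
    using assms(1) k unfolding madd_def pref_def by simp
  also have "(pref (\<lambda>x. x + D x) k xs)[k := xs ! k + D (xs ! k)] = pref (\<lambda>x. x + D x) (Suc k) xs"
    unfolding pref_def using k by (intro nth_equalityI) (auto simp: nth_list_update)
  finally show ?case .
qed

lemma subset_sum: assumes "madd g" "addf D"
  shows "(\<Sum>S\<in>{S. S \<subseteq> {..<length xs} \<and> S \<noteq> {}}. g (apply_D_at D S xs)) = g (map (\<lambda>x. x + D x) xs) - g xs"
proof -
  have e: "{S. S \<subseteq> {..<length xs} \<and> S \<noteq> {}} = Pow {..<length xs} - {{}}" by auto
  have "(\<Sum>S\<in>Pow {..<length xs}. g (apply_D_at D S xs)) = g (apply_D_at D {} xs) + (\<Sum>S\<in>Pow {..<length xs} - {{}}. g (apply_D_at D S xs))"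
    by (rule sum.remove) auto
  moreover have "apply_D_at D {} xs = xs" unfolding apply_D_at_def by (simp add: map_nth)
  moreover have "pref (\<lambda>x. x + D x) (length xs) xs = map (\<lambda>x. x + D x) xs"
    unfolding pref_def by (intro nth_equalityI) auto
  ultimately show ?thesis using subset_sum_aux[OF assms, of "length xs" xs] unfolding e
    by (simp add: algebra_simps)
qed

lemma T_formula: assumes "madd g" "addf D"
  shows "T_op scale D g xs = scale ((-1) ^ length xs) (g (map (\<lambda>x. x + D x) xs) - (g xs + D (g xs)))"
  unfolding T_op_def subset_sum[OF assms] by (simp add: algebra_simps)

definition f0 :: "nat \<Rightarrow> ('g::ab_group_add list \<Rightarrow> 'g) \<Rightarrow> 'g list \<Rightarrow> 'g" where
  "f0 n f xs = (if length xs = n then f xs else 0)"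

lemma f0_madd: fixes f :: "'g::ab_group_add list \<Rightarrow> 'g" assumes "alt_multilinear scale n f" shows "madd (f0 n f)"
  unfolding madd_def
proof (intro allI impI)
  fix xs :: "'g list" and i a b assume i: "i < length xs"
  show "f0 n f (xs[i := a + b]) = f0 n f (xs[i := a]) + f0 n f (xs[i := b])"
  proof (cases "length xs = n")
    case True
    then have "Vector_Spaces.linear scale scale (\<lambda>a. f (xs[i := a]))" using assms i unfolding alt_multilinear_def by auto
    then show ?thesis unfolding f0_def using True by (simp add: linear_iff)
  next
    case False then show ?thesis unfolding f0_def by simp
  qed
qed

lemma f0_aalt: assumes "alt_multilinear scale n f" shows "aalt (f0 n f)"
  unfolding aalt_def f0_def using assms unfolding alt_multilinear_def
  by (metis lessI)

context
  fixes scale :: "'k::field \<Rightarrow> 'g::ab_group_add \<Rightarrow> 'g" and br :: "'g \<Rightarrow> 'g \<Rightarrow> 'g" and D :: "'g \<Rightarrow> 'g"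
  assumes dla: "difference_lie_algebra scale br D"
begin

lemma vs: "vector_space scale"
  using dla unfolding difference_lie_algebra_def lie_algebra_def by auto

lemma lin2: "br x (u + v) = br x u + br x v" "br x (scale c u) = scale c (br x u)"
  using dla unfolding difference_lie_algebra_def lie_algebra_def linear_iff by auto

lemma lin1: "br (u + v) y = br u y + br v y"
  using dla unfolding difference_lie_algebra_def lie_algebra_def linear_iff by auto

lemma linD: "D (u + v) = D u + D v" "D (scale c u) = scale c (D u)"
  using dla unfolding difference_lie_algebra_def lie_algebra_def linear_iff by auto

lemma Dbr: "D (br x y) = br x (D y) - br y (D x) + br (D x) (D y)"
  using dla unfolding difference_lie_algebra_def by auto

lemma lb: "liebr br"
  using dla unfolding difference_lie_algebra_def lie_algebra_def linear_iff
  by unfold_locales auto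

interpretation L: liebr br by (rule lb)

lemma hom: "br (a + D a) (b + D b) = (br a b + D (br a b))"
proof -
  have "br (a + D a) (b + D b) = br a b + br a (D b) + (br (D a) b + br (D a) (D b))"
    by (simp add: lin1 lin2)
  also have "br (D a) b = - br b (D a)" by (rule L.br_anti)
  finally show ?thesis unfolding Dbr by (simp add: algebra_simps)
qed

lemma rep_ad: "L.isrep (ad br)"
  unfolding L.isrep_def ad_def addf_def using L.br_jac2 by (auto simp: lin1 lin2)

lemma adD_eq: "ad_D br D x u = br (x + D x) u"
  unfolding ad_D_def by (simp add: lin1)

lemma rep_adD: "L.isrep (ad_D br D)"
  unfolding L.isrep_def addf_def adD_eq
proof (intro conjI allI)
  fix x y v
  show "br (x + D x) (br (y + D y) v) - br (y + D y) (br (x + D x) v) = br (br x y + D (br x y)) v"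
    unfolding L.br_jac2 hom ..
qed (auto simp: lin1 lin2 linD algebra_simps)

lemma d2: assumes "alt_multilinear scale n f" "L.isrep rho" "length xs = n + 2"
  shows "ce_diff scale br rho (ce_diff scale br rho f) xs = 0"
proof -
  let ?F = "f0 n f"
  have mF: "madd ?F" and aF: "aalt ?F" using f0_madd[OF assms(1)] f0_aalt[OF assms(1)] .
  have "ce_diff scale br rho f zs = dd br rho ?F zs" if "length zs + 1 = length xs" for zs
  proof -
    have "ce_diff scale br rho f zs = ce_diff scale br rho ?F zs"
      by (rule ce_local) (use that assms(3) in \<open>auto simp: f0_def\<close>)
    also have "\<dots> = dd br rho ?F zs" by (rule L.ce_dd[OF vs mF aF])
    finally show ?thesis .
  qed
  then have "ce_diff scale br rho (ce_diff scale br rho f) xs = ce_diff scale br rho (dd br rho ?F) xs"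
    by (intro ce_local) auto
  also have "\<dots> = dd br rho (dd br rho ?F) xs"
    by (rule L.ce_dd[OF vs L.madd_dd[OF assms(2) mF] L.aalt_dd[OF assms(2) mF aF]])
  also have "\<dots> = 0" by (rule L.dd_dd[OF assms(2) mF])
  finally show ?thesis .
qed


lemma K2: assumes "alt_multilinear scale n f" "length ys = n + 1"
  shows "ce_diff scale br (ad_D br D) (T_op scale D f) ys + T_op scale D (ce_diff scale br (ad br) f) ys = 0"
proof -
  interpret V: vector_space scale by (rule vs)
  define phi where "phi = (\<lambda>x. x + D x)"
  define F where "F = f0 n f"
  define c where "c = ((-1::'k) ^ n)"
  define PF where "PF = (\<lambda>xs. F (map phi xs) - (F xs + D (F xs)))"
  have mF: "madd F" and aF: "aalt F" unfolding F_def using f0_madd[OF assms(1)] f0_aalt[OF assms(1)] .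
  have aD: "addf D" unfolding addf_def using linD by auto
  have aphi: "addf phi" unfolding addf_def phi_def using linD by (auto simp: algebra_simps)
  have raD: "\<And>x. addf (ad_D br D x)" using rep_adD unfolding L.isrep_def by auto
  have phiF: "F xs + D (F xs) = phi (F xs)" for xs unfolding phi_def ..
  have T1: "T_op scale D f zs = scale c (PF zs)" if "length zs = n" for zs
  proof -
    have "T_op scale D f zs = T_op scale D F zs"
      by (rule T_local) (use that in \<open>simp add: F_def f0_def\<close>)
    also have "\<dots> = scale c (PF zs)" unfolding T_formula[OF mF aD] PF_def c_def phi_def that ..
    finally show ?thesis .
  qed
  have mQ: "madd (\<lambda>xs. scale c (PF xs))"
    unfolding madd_def
  proof (intro allI impI)
    fix xs :: "'g list" and i a b assume i: "i < length xs"
    have m: "map phi (xs[i := u]) = (map phi xs)[i := phi u]" for u by (simp add: map_update)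
    have "F (map phi (xs[i := a + b])) = F (map phi (xs[i := a])) + F (map phi (xs[i := b]))"
      unfolding m using aphi mF i unfolding addf_def madd_def by simp
    moreover have "F (xs[i := a + b]) = F (xs[i := a]) + F (xs[i := b])" using mF i unfolding madd_def by simp
    ultimately have "PF (xs[i := a + b]) = PF (xs[i := a]) + PF (xs[i := b])"
      unfolding PF_def by (simp add: linD algebra_simps)
    then show "scale c (PF (xs[i := a + b])) = scale c (PF (xs[i := a])) + scale c (PF (xs[i := b]))"
      by (simp add: V.scale_right_distrib)
  qed
  have aQ: "aalt (\<lambda>xs. scale c (PF xs))"
    unfolding aalt_def
  proof (intro allI impI)
    fix xs :: "'g list" and i assume i: "Suc i < length xs" "xs ! i = xs ! Suc i"
    have "F (map phi xs) = 0" using aF i unfolding aalt_def by simp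
    moreover have "F xs = 0" using aF i unfolding aalt_def by simp
    ultimately show "scale c (PF xs) = 0" unfolding PF_def using addf_zero[OF aD] by simp
  qed
  have "ce_diff scale br (ad_D br D) (T_op scale D f) ys = ce_diff scale br (ad_D br D) (\<lambda>xs. scale c (PF xs)) ys"
    by (rule ce_local) (use T1 assms(2) in auto)
  also have "\<dots> = dd br (ad_D br D) (\<lambda>xs. scale c (PF xs)) ys"
    by (rule L.ce_dd[OF vs mQ aQ])
  also have "\<dots> = scale c (dd br (ad_D br D) PF ys)"
    by (rule dd_map) (auto simp: adD_eq lin2 addf_def V.scale_right_distrib)
  also have "dd br (ad_D br D) PF ys = dd br (ad_D br D) (\<lambda>xs. F (map phi xs)) ys - dd br (ad_D br D) (\<lambda>xs. phi (F xs)) ys"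
    unfolding PF_def phiF by (rule dd_minus[OF raD])
  also have "dd br (ad_D br D) (\<lambda>xs. F (map phi xs)) ys = dd br (ad br) F (map phi ys)"
    by (rule L.dd_pull) (auto simp: adD_eq ad_def phi_def hom)
  also have "dd br (ad_D br D) (\<lambda>xs. phi (F xs)) ys = phi (dd br (ad br) F ys)"
    by (rule dd_map2[OF _ aphi]) (auto simp: adD_eq ad_def phi_def hom)
  finally have A: "ce_diff scale br (ad_D br D) (T_op scale D f) ys = scale c (dd br (ad br) F (map phi ys) - phi (dd br (ad br) F ys))" .
  have "T_op scale D (ce_diff scale br (ad br) f) ys = T_op scale D (dd br (ad br) F) ys"
  proof (rule T_local)
    fix zs :: "'g list" assume z: "length zs = length ys"
    have "ce_diff scale br (ad br) f zs = ce_diff scale br (ad br) F zs"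
      by (rule ce_local) (use z assms(2) in \<open>auto simp: F_def f0_def\<close>)
    also have "\<dots> = dd br (ad br) F zs" by (rule L.ce_dd[OF vs mF aF])
    finally show "ce_diff scale br (ad br) f zs = dd br (ad br) F zs" .
  qed
  also have "\<dots> = scale (- c) (dd br (ad br) F (map phi ys) - phi (dd br (ad br) F ys))"
    unfolding T_formula[OF L.madd_dd[OF rep_ad mF] aD] assms(2) c_def phi_def by simp
  finally have B: "T_op scale D (ce_diff scale br (ad br) f) ys = scale (- c) (dd br (ad br) F (map phi ys) - phi (dd br (ad br) F ys))" .
  show ?thesis unfolding A B by simp
qed

end

theorem theorem4p1:
  fixes scale :: "'k::field \<Rightarrow> 'g::ab_group_add \<Rightarrow> 'g"
    and br :: "'g \<Rightarrow> 'g \<Rightarrow> 'g" and D :: "'g \<Rightarrow> 'g"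
  assumes "difference_lie_algebra scale br D"
  shows "(\<forall>f. alt_multilinear scale 1 f \<longrightarrow>
            (\<forall>xs. length xs = 3 \<longrightarrow> fst (delta_bar scale br D (delta_bar1 scale br D f)) xs = 0) \<and>
            (\<forall>ys. length ys = 2 \<longrightarrow> snd (delta_bar scale br D (delta_bar1 scale br D f)) ys = 0))
       \<and> (\<forall>n f \<theta>. n \<ge> 2 \<longrightarrow> alt_multilinear scale n f \<longrightarrow> alt_multilinear scale (n - 1) \<theta> \<longrightarrow>
            (\<forall>xs. length xs = n + 2 \<longrightarrow> fst (delta_bar scale br D (delta_bar scale br D (f, \<theta>))) xs = 0) \<and>
            (\<forall>ys. length ys = n + 1 \<longrightarrow> snd (delta_bar scale br D (delta_bar scale br D (f, \<theta>))) ys = 0))"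
proof -
  note A = assms
  interpret L: liebr br by (rule lb[OF A])
  have raD: "\<And>x. addf (ad_D br D x)" using rep_adD[OF A] unfolding L.isrep_def by auto
  have P1: "(\<forall>xs. length xs = 3 \<longrightarrow> fst (delta_bar scale br D (delta_bar1 scale br D f)) xs = 0) \<and>
            (\<forall>ys. length ys = 2 \<longrightarrow> snd (delta_bar scale br D (delta_bar1 scale br D f)) ys = 0)"
    if f: "alt_multilinear scale 1 f" for f
  proof (intro conjI allI impI)
    fix xs :: "'g list" assume "length xs = 3"
    then show "fst (delta_bar scale br D (delta_bar1 scale br D f)) xs = 0"
      unfolding delta_bar_def delta_bar1_def using d2[OF A f rep_ad[OF A]] by simp
  next
    fix ys :: "'g list" assume "length ys = 2"
    then show "snd (delta_bar scale br D (delta_bar1 scale br D f)) ys = 0"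
      unfolding delta_bar_def delta_bar1_def using K2[OF A f] by simp
  qed
  have P2: "(\<forall>xs. length xs = n + 2 \<longrightarrow> fst (delta_bar scale br D (delta_bar scale br D (f, \<theta>))) xs = 0) \<and>
            (\<forall>ys. length ys = n + 1 \<longrightarrow> snd (delta_bar scale br D (delta_bar scale br D (f, \<theta>))) ys = 0)"
    if n: "n \<ge> 2" and f: "alt_multilinear scale n f" and t: "alt_multilinear scale (n - 1) \<theta>" for n f \<theta>
  proof (intro conjI allI impI)
    fix xs :: "'g list" assume "length xs = n + 2"
    then show "fst (delta_bar scale br D (delta_bar scale br D (f, \<theta>))) xs = 0"
      unfolding delta_bar_def using d2[OF A f rep_ad[OF A]] by simp
  next
    fix ys :: "'g list" assume ys: "length ys = n + 1"
    have "snd (delta_bar scale br D (delta_bar scale br D (f, \<theta>))) ys =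
       ce_diff scale br (ad_D br D) (\<lambda>xs. ce_diff scale br (ad_D br D) \<theta> xs + T_op scale D f xs) ys
       + T_op scale D (ce_diff scale br (ad br) f) ys"
      unfolding delta_bar_def by simp
    also have "ce_diff scale br (ad_D br D) (\<lambda>xs. ce_diff scale br (ad_D br D) \<theta> xs + T_op scale D f xs) ys
       = ce_diff scale br (ad_D br D) (ce_diff scale br (ad_D br D) \<theta>) ys + ce_diff scale br (ad_D br D) (T_op scale D f) ys"
      by (rule ce_add[OF vs[OF A] raD])
    also have "ce_diff scale br (ad_D br D) (ce_diff scale br (ad_D br D) \<theta>) ys = 0"
      using d2[OF A t rep_adD[OF A]] ys n by simp
    finally show "snd (delta_bar scale br D (delta_bar scale br D (f, \<theta>))) ys = 0"
      using K2[OF A f ys] by simp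
  qed
  show ?thesis using P1 P2 by blast
qed

end
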